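(* Let $m\ge2$ be an integer and let $1<p_1,\dots,p_m\le2$ with $\frac12\le\frac1{p_1}+\cdots+\frac1{p_m}\le1$. Let $E_1,\dots,E_m,F$ be Banach spaces. Then every $T\in\mathcal{L}^{multi}_{al,(p_1,\dots,p_m)}(E_1,\dots,E_m;F)$ has multi-type $(p_1,\dots,p_m)$, and $\|T\|_{\tau^{multi}_{p_1,\dots,p_m}}\le\|T\|_{\mathcal{L}^{multi}_{al,(p_1,\dots,p_m)}}$; that is, $\mathcal{L}^{multi}_{al,(p_1,\dots,p_m)}(E_1,\dots,E_m;F)\overset{1}{\hookrightarrow}\tau^{multi}_{p_1,\dots,p_m}(E_1,\dots,E_m;F)$.
   Context: $\ell_p(E)$ is the space of $p$-summable sequences with $\|(x_j)\|_p=(\sum\|x_j\|^p)^{1/p}$; $\ell_p^u(E)$ is the space of weakly $p$-summable sequences $(x_j)$ (with $\|(x_j)\|_{w,p}:=\sup_{\varphi\in B_{E'}}(\sum_j|\varphi(x_j)|^p)^{1/p}$) such that $\|(x_j)_{j\ge n}\|_{w,p}\to0$, normed by $\|\cdot\|_{w,p}$. $r_j$ is the $j$-th Rademacher function. $Rad(F;\mathbb{N}^m)$ is the space of $F$-valued $m$-indexed families $(y_{j_1,\dots,j_m})$ such that $\sum_{j_1,\dots,j_m=1}^{n_1,\dots,n_m}r_{j_1}(t_1)\cdots r_{j_m}(t_m)y_{j_1,\dots,j_m}$ converges in $L_2([0,1]^m;F)$, normed by $\left(\int_{[0,1]^m}\|\sum r_{j_1}(t_1)\cdots r_{j_m}(t_m)y_{j_1,\dots,j_m}\|^2dt\right)^{1/2}$.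 $\mathcal{L}^{multi}_{al,(p_1,\dots,p_m)}(E_1,\dots,E_m;F)$ (multiple almost $(p_1,\dots,p_m)$-summing operators) is the space of continuous $m$-linear $T$ with $(T(x^{(1)}_{j_1},\dots,x^{(m)}_{j_m}))_{j_1,\dots,j_m}\in Rad(F;\mathbb{N}^m)$ whenever $(x^{(i)}_j)_j\in\ell^u_{p_i}(E_i)$, normed by the operator norm of the induced continuous $m$-linear map $\ell^u_{p_1}(E_1)\times\cdots\times\ell^u_{p_m}(E_m)\to Rad(F;\mathbb{N}^m)$. $T$ has multi-type $(p_1,\dots,p_m)$ if there is $C>0$ with $\|(T(x^{(1)}_{j_1},\dots,x^{(m)}_{j_m}))_{j_1,\dots,j_m=1}^{n_1,\dots,n_m}\|_{Rad(F;\mathbb{N}^m)}\le C\prod_i\|(x^{(i)}_j)_{j=1}^{n_i}\|_{p_i}$ for all finite choices of vectors; $\tau^{multi}_{p_1,\dots,p_m}(E_1,\dots,E_m;F)$ is the space of such $T$ and $\|T\|_{\tau^{multi}_{p_1,\dots,p_m}}$ the infimum of such constants $C$. *)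

theory Defs
  imports "HOL-Analysis.Analysis" "HOL-Probability.Probability"
begin

text \<open>Sequences are indexed from 0: the sequence (x_j) with j \<ge> 1 of the
paper is represented by x :: nat \<Rightarrow> 'e with x k = x_(k+1); accordingly the k-th term
is paired with the Rademacher function r_(k+1).
The Banach spaces E_1,...,E_m are closed linear subspaces E 0, ..., E (m-1) of a common
real Banach space of type 'e; F is a real Banach space of type 'f.
An m-linear map is a function T :: (nat \<Rightarrow> 'e) \<Rightarrow> 'f depending only on its first m
arguments.\<close>

definition rademacher :: "nat \<Rightarrow> real \<Rightarrow> real" where
  "rademacher j t = sgn (sin (2 ^ j * pi * t))"

definition unit_cube :: "nat \<Rightarrow> (nat \<Rightarrow> real) measure" where
  "unit_cube m = PiM {..<m} (\<lambda>_. restrict_space lborel {0..1::real})"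

definition dual_ball :: "('e::real_normed_vector \<Rightarrow> real) set" where
  "dual_ball = {\<phi>. bounded_linear \<phi> \<and> onorm \<phi> \<le> 1}"

definition weakly_summable :: "real \<Rightarrow> (nat \<Rightarrow> 'e::real_normed_vector) \<Rightarrow> bool" where
  "weakly_summable p x \<longleftrightarrow>
     (\<forall>\<phi>. bounded_linear \<phi> \<longrightarrow> summable (\<lambda>j. \<bar>\<phi> (x j)\<bar> powr p)) \<and>
     bdd_above ((\<lambda>\<phi>. (\<Sum>j. \<bar>\<phi> (x j)\<bar> powr p) powr (1/p)) ` dual_ball)"

definition wnorm :: "real \<Rightarrow> (nat \<Rightarrow> 'e::real_normed_vector) \<Rightarrow> real" where
  "wnorm p x = (SUP \<phi>\<in>dual_ball. (\<Sum>j. \<bar>\<phi> (x j)\<bar> powr p) powr (1/p))"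

definition ell_u :: "real \<Rightarrow> 'e::real_normed_vector set \<Rightarrow> (nat \<Rightarrow> 'e) \<Rightarrow> bool" where
  "ell_u p E x \<longleftrightarrow> (\<forall>j. x j \<in> E) \<and> weakly_summable p x \<and>
     (\<lambda>n. wnorm p (\<lambda>j. x (j + n))) \<longlonglongrightarrow> 0"

definition radsum :: "nat \<Rightarrow> ((nat \<Rightarrow> nat) \<Rightarrow> 'f::real_normed_vector) \<Rightarrow> (nat \<Rightarrow> nat)
    \<Rightarrow> (nat \<Rightarrow> real) \<Rightarrow> 'f" where
  "radsum m y n t = (\<Sum>j\<in>PiE {..<m} (\<lambda>i. {..<n i}).
      (\<Prod>i<m. rademacher (j i + 1) (t i)) *\<^sub>R y j)"

definition rad_fin :: "nat \<Rightarrow> ((nat \<Rightarrow> nat) \<Rightarrow> 'f::real_normed_vector) \<Rightarrow> (nat \<Rightarrow> nat) \<Rightarrow> real" where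
  "rad_fin m y n = sqrt (integral\<^sup>L (unit_cube m) (\<lambda>t. (norm (radsum m y n t))\<^sup>2))"

definition rad_dist :: "nat \<Rightarrow> ((nat \<Rightarrow> nat) \<Rightarrow> 'f::real_normed_vector) \<Rightarrow> (nat \<Rightarrow> nat)
    \<Rightarrow> (nat \<Rightarrow> nat) \<Rightarrow> real" where
  "rad_dist m y n n' = sqrt (integral\<^sup>L (unit_cube m)
      (\<lambda>t. (norm (radsum m y n t - radsum m y n' t))\<^sup>2))"

text \<open>Membership in Rad(F;N^m): the partial sums converge in L_2([0,1]^m;F) as all
n_i \<rightarrow> \<infinity>; since L_2([0,1]^m;F) is complete (F Banach), this is the Cauchy condition.\<close>
definition in_rad :: "nat \<Rightarrow> ((nat \<Rightarrow> nat) \<Rightarrow> 'f::real_normed_vector) \<Rightarrow> bool" where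
  "in_rad m y \<longleftrightarrow> (\<forall>\<epsilon>>0. \<exists>N. \<forall>n n'. (\<forall>i<m. N \<le> n i \<and> N \<le> n' i) \<longrightarrow> rad_dist m y n n' < \<epsilon>)"

text \<open>Norm in Rad(F;N^m): L_2 norm of the limit, i.e. limit of the norms of the partial sums
(evaluated along the cofinal diagonal n_1 = ... = n_m = N).\<close>
definition rad_norm :: "nat \<Rightarrow> ((nat \<Rightarrow> nat) \<Rightarrow> 'f::real_normed_vector) \<Rightarrow> real" where
  "rad_norm m y = lim (\<lambda>N. rad_fin m y (\<lambda>_. N))"

definition cont_multilinear ::
    "nat \<Rightarrow> (nat \<Rightarrow> 'e::real_normed_vector set) \<Rightarrow> ((nat \<Rightarrow> 'e) \<Rightarrow> 'f::real_normed_vector) \<Rightarrow> bool" where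
  "cont_multilinear m E T \<longleftrightarrow>
     (\<forall>x y. (\<forall>i<m. x i = y i) \<longrightarrow> T x = T y) \<and>
     (\<forall>x i. i < m \<longrightarrow> (\<forall>k<m. x k \<in> E k) \<longrightarrow>
        (\<forall>u\<in>E i. \<forall>v\<in>E i. T (x(i := u + v)) = T (x(i := u)) + T (x(i := v))) \<and>
        (\<forall>u\<in>E i. \<forall>c. T (x(i := c *\<^sub>R u)) = c *\<^sub>R T (x(i := u)))) \<and>
     (\<exists>C. \<forall>x. (\<forall>i<m. x i \<in> E i) \<longrightarrow> norm (T x) \<le> C * (\<Prod>i<m. norm (x i)))"

text \<open>The m-indexed family (T(x^(1)_{j_1},...,x^(m)_{j_m})), with X i the sequence x^(i+1).\<close>
definition tfam :: "((nat \<Rightarrow> 'e) \<Rightarrow> 'f) \<Rightarrow> (nat \<Rightarrow> nat \<Rightarrow> 'e) \<Rightarrow> (nat \<Rightarrow> nat) \<Rightarrow> 'f" where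
  "tfam T X = (\<lambda>j. T (\<lambda>i. X i (j i)))"

definition multi_almost_summing ::
    "nat \<Rightarrow> (nat \<Rightarrow> real) \<Rightarrow> (nat \<Rightarrow> 'e::real_normed_vector set) \<Rightarrow> ((nat \<Rightarrow> 'e) \<Rightarrow> 'f::real_normed_vector) \<Rightarrow> bool" where
  "multi_almost_summing m p E T \<longleftrightarrow> cont_multilinear m E T \<and>
     (\<forall>X. (\<forall>i<m. ell_u (p i) (E i) (X i)) \<longrightarrow> in_rad m (tfam T X)) \<and>
     (\<exists>C. \<forall>X. (\<forall>i<m. ell_u (p i) (E i) (X i)) \<longrightarrow>
        rad_norm m (tfam T X) \<le> C * (\<Prod>i<m. wnorm (p i) (X i)))"

definition al_norm ::
    "nat \<Rightarrow> (nat \<Rightarrow> real) \<Rightarrow> (nat \<Rightarrow> 'e::real_normed_vector set) \<Rightarrow> ((nat \<Rightarrow> 'e) \<Rightarrow> 'f::real_normed_vector) \<Rightarrow> real" where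
  "al_norm m p E T = Sup {rad_norm m (tfam T X) | X.
      \<forall>i<m. ell_u (p i) (E i) (X i) \<and> wnorm (p i) (X i) \<le> 1}"

definition multi_type_const ::
    "nat \<Rightarrow> (nat \<Rightarrow> real) \<Rightarrow> (nat \<Rightarrow> 'e::real_normed_vector set) \<Rightarrow> ((nat \<Rightarrow> 'e) \<Rightarrow> 'f::real_normed_vector) \<Rightarrow> real \<Rightarrow> bool" where
  "multi_type_const m p E T C \<longleftrightarrow> C > 0 \<and>
     (\<forall>n X. (\<forall>i<m. \<forall>j<n i. X i j \<in> E i) \<longrightarrow>
        rad_fin m (tfam T X) n \<le> C * (\<Prod>i<m. (\<Sum>j<n i. norm (X i j) powr p i) powr (1 / p i)))"

definition has_multi_type ::
    "nat \<Rightarrow> (nat \<Rightarrow> real) \<Rightarrow> (nat \<Rightarrow> 'e::real_normed_vector set) \<Rightarrow> ((nat \<Rightarrow> 'e) \<Rightarrow> 'f::real_normed_vector) \<Rightarrow> bool" where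
  "has_multi_type m p E T \<longleftrightarrow> (\<exists>C. multi_type_const m p E T C)"

definition tau_norm ::
    "nat \<Rightarrow> (nat \<Rightarrow> real) \<Rightarrow> (nat \<Rightarrow> 'e::real_normed_vector set) \<Rightarrow> ((nat \<Rightarrow> 'e) \<Rightarrow> 'f::real_normed_vector) \<Rightarrow> real" where
  "tau_norm m p E T = Inf {C. multi_type_const m p E T C}"

end

theory Submission
  imports Defs
begin

lemma dual_ball_ne: "(\<lambda>_. 0) \<in> dual_ball"
  by (simp add: dual_ball_def onorm_zero)

lemma dual_bound: "\<phi> \<in> dual_ball \<Longrightarrow> \<bar>\<phi> v\<bar> \<le> norm v"
proof -
  assume "\<phi> \<in> dual_ball"
  then have b: "bounded_linear \<phi>" "onorm \<phi> \<le> 1" by (auto simp: dual_ball_def)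
  have "norm (\<phi> v) \<le> onorm \<phi> * norm v" by (rule onorm[OF b(1)])
  also have "\<dots> \<le> norm v" using b(2) by (simp add: mult_left_le_one_le onorm_pos_le[OF b(1)] mult_right_le_one_le)
  finally show ?thesis by simp
qed

lemma fin_sum_bound:
  assumes "\<forall>j\<ge>N. y j = 0" "p > 0" "\<phi> \<in> dual_ball"
  shows "(\<Sum>j. \<bar>\<phi> (y j)\<bar> powr p) powr (1/p) \<le> (\<Sum>j<N. norm (y j) powr p) powr (1/p)"
proof -
  have lin: "bounded_linear \<phi>" using assms(3) by (auto simp: dual_ball_def)
  have eq: "(\<Sum>j. \<bar>\<phi> (y j)\<bar> powr p) = (\<Sum>j<N. \<bar>\<phi> (y j)\<bar> powr p)"
    apply (rule suminf_finite) using assms(1) linear_0[OF bounded_linear.linear[OF lin]] by auto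
  also have "\<dots> \<le> (\<Sum>j<N. norm (y j) powr p)"
    by (rule sum_mono, rule powr_mono2) (use assms dual_bound in auto)
  finally show ?thesis by (intro powr_mono2) (use assms eq in \<open>auto intro: sum_nonneg\<close>)
qed

lemma wnorm_fin_le:
  assumes "\<forall>j\<ge>N. y j = 0" "p > 0"
  shows "wnorm p y \<le> (\<Sum>j<N. norm (y j) powr p) powr (1/p)"
  unfolding wnorm_def
  apply (rule cSUP_least)
  using dual_ball_ne fin_sum_bound[OF assms] by auto

lemma wnorm_zero: "wnorm p (\<lambda>j. 0::'a::real_normed_vector) = 0"
proof -
  have h: "\<And>\<phi>. \<phi> \<in> dual_ball \<Longrightarrow> (\<Sum>j. \<bar>\<phi> (0::'a)\<bar> powr p) powr (1/p) = 0"
    by (auto simp: dual_ball_def linear_0 bounded_linear.linear)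
  have "wnorm p (\<lambda>j. 0::'a) = (SUP \<phi>\<in>(dual_ball :: ('a \<Rightarrow> real) set). (0::real))"
    unfolding wnorm_def by (rule SUP_cong[OF refl]) (rule h)
  also have "\<dots> = 0" using dual_ball_ne by (auto intro: cSUP_const)
  finally show ?thesis .
qed

lemma ell_u_fin:
  assumes "\<forall>j. y j \<in> E" "\<forall>j\<ge>N. y j = 0" "p > 0"
  shows "ell_u p E y"
  unfolding ell_u_def weakly_summable_def
proof (intro conjI allI impI)
  show "\<And>j. y j \<in> E" using assms by auto
  fix \<phi> :: "'a \<Rightarrow> real" assume "bounded_linear \<phi>"
  then show "summable (\<lambda>j. \<bar>\<phi> (y j)\<bar> powr p)"
    by (intro summable_finite[of "{..<N}"]) (use assms linear_0 bounded_linear.linear in auto)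
next
  show "bdd_above ((\<lambda>\<phi>. (\<Sum>j. \<bar>\<phi> (y j)\<bar> powr p) powr (1 / p)) ` dual_ball)"
    using fin_sum_bound[OF assms(2,3)] by (auto intro!: bdd_aboveI2)
next
  have "\<forall>\<^sub>F n in sequentially. wnorm p (\<lambda>j. y (j + n)) = 0"
    unfolding eventually_sequentially
    by (rule exI[of _ N]) (use assms wnorm_zero in auto)
  then show "(\<lambda>n. wnorm p (\<lambda>j. y (j + n))) \<longlonglongrightarrow> 0" by (rule tendsto_eventually)
qed

lemma ml_zero:
  assumes ml: "cont_multilinear m E T" and sub: "\<forall>k<m. subspace (E k)"
    and x: "\<forall>k<m. x k \<in> E k" and i: "i < m" "x i = 0"
  shows "T x = 0"
proof -
  have "0 \<in> E i" using sub i by (simp add: subspace_0)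
  then have "T (x(i := (0::real) *\<^sub>R 0)) = (0::real) *\<^sub>R T (x(i := 0))"
    using ml x i unfolding cont_multilinear_def by blast
  moreover have "x(i := (0::real) *\<^sub>R 0) = x" using i by auto
  ultimately show ?thesis by simp
qed

lemma ml_scale_aux:
  assumes ml: "cont_multilinear m E T" and sub: "\<forall>k<m. subspace (E k)"
    and x: "\<forall>k<m. x k \<in> E k"
  shows "k \<le> m \<Longrightarrow> T (\<lambda>i. if i < k then c i *\<^sub>R x i else x i) = (\<Prod>i<k. c i) *\<^sub>R T x"
proof (induction k)
  case 0
  then show ?case by simp
next
  case (Suc k)
  define x' where "x' = (\<lambda>i. if i < k then c i *\<^sub>R x i else x i)"
  have x'E: "\<forall>j<m. x' j \<in> E j" using x sub by (auto simp: x'_def subspace_scale)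
  have "x k \<in> E k" using x Suc by auto
  then have "T (x'(k := c k *\<^sub>R x k)) = c k *\<^sub>R T (x'(k := x k))"
    using ml x'E Suc unfolding cont_multilinear_def by auto
  moreover have "x'(k := x k) = x'" by (auto simp: x'_def)
  moreover have "x'(k := c k *\<^sub>R x k) = (\<lambda>i. if i < Suc k then c i *\<^sub>R x i else x i)"
    by (auto simp: x'_def)
  ultimately show ?case using Suc by (simp add: x'_def)
qed

lemma ml_scale:
  assumes ml: "cont_multilinear m E T" and sub: "\<forall>k<m. subspace (E k)"
    and x: "\<forall>k<m. x k \<in> E k"
  shows "T (\<lambda>i. c i *\<^sub>R x i) = (\<Prod>i<m. c i) *\<^sub>R T x"
proof -
  have "T (\<lambda>i. c i *\<^sub>R x i) = T (\<lambda>i. if i < m then c i *\<^sub>R x i else x i)"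
    using ml unfolding cont_multilinear_def by auto
  then show ?thesis using ml_scale_aux[OF assms, of m c] by simp
qed

lemma rad_fin_scale:
  assumes "\<And>t. radsum m y n t = a *\<^sub>R radsum m z n t"
  shows "rad_fin m y n = \<bar>a\<bar> * rad_fin m z n"
proof -
  have "(\<lambda>t. (norm (radsum m y n t))\<^sup>2) = (\<lambda>t. a\<^sup>2 * (norm (radsum m z n t))\<^sup>2)"
    using assms by (auto simp: power_mult_distrib)
  then have "integral\<^sup>L (unit_cube m) (\<lambda>t. (norm (radsum m y n t))\<^sup>2)
      = a\<^sup>2 * integral\<^sup>L (unit_cube m) (\<lambda>t. (norm (radsum m z n t))\<^sup>2)" by simp
  then show ?thesis unfolding rad_fin_def by (simp add: real_sqrt_mult)
qed

lemma rad_norm_fin: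
  assumes ml: "cont_multilinear m E T" and sub: "\<forall>k<m. subspace (E k)"
    and Y: "\<forall>i<m. \<forall>j. Y i j \<in> E i" and Y0: "\<forall>i<m. \<forall>j\<ge>n i. Y i j = 0"
  shows "rad_norm m (tfam T Y) = rad_fin m (tfam T Y) n"
proof -
  define N0 where "N0 = (\<Sum>i<m. n i)"
  have "rad_fin m (tfam T Y) (\<lambda>_. N) = rad_fin m (tfam T Y) n" if "N \<ge> N0" for N
  proof -
    have nN: "\<forall>i<m. n i \<le> N" using that unfolding N0_def
      by (metis finite_lessThan lessThan_iff member_le_sum order_trans zero_le)
    have "radsum m (tfam T Y) (\<lambda>_. N) t = radsum m (tfam T Y) n t" for t
      unfolding radsum_def
    proof (rule sum.mono_neutral_right)
      show "finite (PiE {..<m} (\<lambda>_. {..<N}))" by (simp add: finite_PiE)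
      show "PiE {..<m} (\<lambda>i. {..<n i}) \<subseteq> PiE {..<m} (\<lambda>_. {..<N})"
        using nN by (intro PiE_mono) auto
      show "\<forall>j\<in>PiE {..<m} (\<lambda>_. {..<N}) - PiE {..<m} (\<lambda>i. {..<n i}).
              (\<Prod>i<m. rademacher (j i + 1) (t i)) *\<^sub>R tfam T Y j = 0"
      proof
        fix j assume j: "j \<in> PiE {..<m} (\<lambda>_. {..<N}) - PiE {..<m} (\<lambda>i. {..<n i})"
        then obtain i where i: "i < m" "j i \<ge> n i"
          by (auto simp: PiE_iff)
        have "tfam T Y j = 0" unfolding tfam_def
          by (rule ml_zero[OF ml sub, of _ i]) (use Y Y0 i in auto)
        then show "(\<Prod>i<m. rademacher (j i + 1) (t i)) *\<^sub>R tfam T Y j = 0" by simp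
      qed
    qed
    then show ?thesis unfolding rad_fin_def by simp
  qed
  then have "(\<lambda>N. rad_fin m (tfam T Y) (\<lambda>_. N)) \<longlonglongrightarrow> rad_fin m (tfam T Y) n"
    by (intro tendsto_eventually) (auto simp: eventually_sequentially)
  then show ?thesis unfolding rad_norm_def by (rule limI)
qed

lemma wnorm_nonneg:
  assumes "weakly_summable p x" shows "wnorm p x \<ge> 0"
  unfolding wnorm_def
  by (rule cSUP_upper2[OF _ dual_ball_ne]) (use assms in \<open>auto simp: weakly_summable_def\<close>)

lemma al_upper:
  assumes mas: "multi_almost_summing m p E T"
    and Y: "\<forall>i<m. ell_u (p i) (E i) (Y i) \<and> wnorm (p i) (Y i) \<le> 1"
  shows "rad_norm m (tfam T Y) \<le> al_norm m p E T"
proof -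
  obtain C where C: "\<forall>X. (\<forall>i<m. ell_u (p i) (E i) (X i)) \<longrightarrow>
        rad_norm m (tfam T X) \<le> C * (\<Prod>i<m. wnorm (p i) (X i))"
    using mas unfolding multi_almost_summing_def by blast
  have b: "bdd_above {rad_norm m (tfam T X) | X.
      \<forall>i<m. ell_u (p i) (E i) (X i) \<and> wnorm (p i) (X i) \<le> 1}"
  proof (rule bdd_aboveI)
    fix r assume "r \<in> {rad_norm m (tfam T X) | X.
      \<forall>i<m. ell_u (p i) (E i) (X i) \<and> wnorm (p i) (X i) \<le> 1}"
    then obtain X where r: "r = rad_norm m (tfam T X)"
      and X: "\<forall>i<m. ell_u (p i) (E i) (X i) \<and> wnorm (p i) (X i) \<le> 1" by blast
    have nn: "\<forall>i<m. 0 \<le> wnorm (p i) (X i)"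
      using X wnorm_nonneg unfolding ell_u_def by blast
    have P0: "0 \<le> (\<Prod>i<m. wnorm (p i) (X i))" using nn by (auto intro: prod_nonneg)
    have P1: "(\<Prod>i<m. wnorm (p i) (X i)) \<le> 1" using nn X by (auto intro: prod_le_1)
    have "r \<le> C * (\<Prod>i<m. wnorm (p i) (X i))" using C X r by auto
    also have "\<dots> \<le> \<bar>C\<bar> * (\<Prod>i<m. wnorm (p i) (X i))"
      using P0 by (intro mult_right_mono) auto
    also have "\<dots> \<le> \<bar>C\<bar>" using P0 P1 by (simp add: mult_left_le)
    finally show "r \<le> \<bar>C\<bar>" .
  qed
  show ?thesis unfolding al_norm_def by (rule cSup_upper[OF _ b]) (use Y in blast)
qed

lemma ml_cong: "cont_multilinear m E T \<Longrightarrow> (\<forall>i<m. x i = y i) \<Longrightarrow> T x = T y"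
  unfolding cont_multilinear_def by blast

lemma core_eps:
  assumes ml: "cont_multilinear m E T" and sub: "\<forall>k<m. subspace (E k)"
    and pos: "\<forall>i<m. p i > 0" and mas: "multi_almost_summing m p E T"
    and X: "\<forall>i<m. \<forall>j<n i. X i j \<in> E i" and e: "e > 0"
  shows "rad_fin m (tfam T X) n \<le> al_norm m p E T *
           (\<Prod>i<m. (\<Sum>j<n i. norm (X i j) powr p i) powr (1/p i) + e)"
proof -
  define s where "s = (\<lambda>i. (\<Sum>j<n i. norm (X i j) powr p i) powr (1/p i))"
  define c where "c = (\<lambda>i. 1 / (s i + e))"
  have s0: "s i \<ge> 0" for i by (simp add: s_def)
  have c0: "c i > 0" for i using s0[of i] e by (simp add: c_def)
  define Y where "Y = (\<lambda>i j. if j < n i then c i *\<^sub>R X i j else 0)"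
  have YE: "\<forall>i<m. \<forall>j. Y i j \<in> E i"
    using X sub by (auto simp: Y_def subspace_scale subspace_0)
  have Y0: "\<forall>i<m. \<forall>j\<ge>n i. Y i j = 0" by (auto simp: Y_def)
  have ell: "\<forall>i<m. ell_u (p i) (E i) (Y i)"
    using YE Y0 pos by (auto intro!: ell_u_fin)
  have wn: "wnorm (p i) (Y i) \<le> 1" if i: "i < m" for i
  proof -
    have pi: "p i > 0" using pos i by auto
    have "wnorm (p i) (Y i) \<le> (\<Sum>j<n i. norm (Y i j) powr p i) powr (1/p i)"
      using Y0 pi i by (intro wnorm_fin_le) auto
    also have "(\<Sum>j<n i. norm (Y i j) powr p i) = c i powr p i * (\<Sum>j<n i. norm (X i j) powr p i)"
      unfolding sum_distrib_left
      by (rule sum.cong) (use c0 in \<open>auto simp: Y_def powr_mult less_imp_le\<close>)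
    also have "(c i powr p i * (\<Sum>j<n i. norm (X i j) powr p i)) powr (1/p i) = c i * s i"
      using c0[of i] pi by (simp add: powr_mult powr_powr s_def sum_nonneg)
    also have "c i * s i \<le> 1" using s0[of i] e by (simp add: c_def)
    finally show ?thesis .
  qed
  have rn: "rad_norm m (tfam T Y) = rad_fin m (tfam T Y) n"
    by (rule rad_norm_fin[OF ml sub YE Y0])
  have up: "rad_norm m (tfam T Y) \<le> al_norm m p E T"
    by (rule al_upper[OF mas]) (use ell wn in auto)
  have rs: "radsum m (tfam T Y) n t = (\<Prod>i<m. c i) *\<^sub>R radsum m (tfam T X) n t" for t
    unfolding radsum_def scaleR_sum_right
  proof (rule sum.cong[OF refl])
    fix j assume j: "j \<in> PiE {..<m} (\<lambda>i. {..<n i})"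
    have "tfam T Y j = T (\<lambda>i. c i *\<^sub>R X i (j i))"
      unfolding tfam_def by (rule ml_cong[OF ml]) (use j in \<open>auto simp: Y_def PiE_iff\<close>)
    also have "\<dots> = (\<Prod>i<m. c i) *\<^sub>R tfam T X j"
      unfolding tfam_def by (rule ml_scale[OF ml sub]) (use X j in \<open>auto simp: PiE_iff\<close>)
    finally show "(\<Prod>i<m. rademacher (j i + 1) (t i)) *\<^sub>R tfam T Y j =
       (\<Prod>i<m. c i) *\<^sub>R (\<Prod>i<m. rademacher (j i + 1) (t i)) *\<^sub>R tfam T X j" by simp
  qed
  have "rad_fin m (tfam T Y) n = \<bar>\<Prod>i<m. c i\<bar> * rad_fin m (tfam T X) n"
    by (rule rad_fin_scale) (rule rs)
  also have "\<bar>\<Prod>i<m. c i\<bar> = 1 / (\<Prod>i<m. s i + e)"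
    using c0 s0 e by (simp add: c_def prod_dividef abs_prod add_nonneg_pos less_imp_le)
  finally have "rad_fin m (tfam T X) n / (\<Prod>i<m. s i + e) \<le> al_norm m p E T"
    using rn up by simp
  moreover have "(\<Prod>i<m. s i + e) > 0" using s0 e by (auto intro: prod_pos add_nonneg_pos)
  ultimately show ?thesis by (simp add: pos_divide_le_eq s_def mult.commute)
qed

theorem proposition4p4:
  fixes m :: nat and p :: "nat \<Rightarrow> real"
    and E :: "nat \<Rightarrow> 'e::banach set"
    and T :: "(nat \<Rightarrow> 'e) \<Rightarrow> 'f::banach"
  assumes "m \<ge> 2"
    and "\<forall>i<m. 1 < p i \<and> p i \<le> 2"
    and "1/2 \<le> (\<Sum>i<m. 1 / p i)" and "(\<Sum>i<m. 1 / p i) \<le> 1"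
    and "\<forall>i<m. subspace (E i) \<and> closed (E i)"
    and "multi_almost_summing m p E T"
  shows "has_multi_type m p E T \<and> tau_norm m p E T \<le> al_norm m p E T"
proof -
  have sub: "\<forall>k<m. subspace (E k)" using assms(5) by auto
  have pos: "\<forall>i<m. p i > 0" using assms(2) by force
  have mas: "multi_almost_summing m p E T" by fact
  have ml: "cont_multilinear m E T" using mas by (simp add: multi_almost_summing_def)
  define al where "al = al_norm m p E T"
  have core: "rad_fin m (tfam T X) n \<le> al *
           (\<Prod>i<m. (\<Sum>j<n i. norm (X i j) powr p i) powr (1/p i))"
    if X: "\<forall>i<m. \<forall>j<n i. X i j \<in> E i" for n X
  proof -
    define s where "s = (\<lambda>i. (\<Sum>j<n i. norm (X i j) powr p i) powr (1/p i))"
    have lim: "((\<lambda>e. al * (\<Prod>i<m. s i + e)) \<longlongrightarrow> al * (\<Prod>i<m. s i + 0)) (at_right 0)"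
      by (intro tendsto_intros)
    have ev: "\<forall>\<^sub>F e in at_right (0::real). rad_fin m (tfam T X) n \<le> al * (\<Prod>i<m. s i + e)"
      using core_eps[OF ml sub pos mas X] unfolding s_def al_def
      by (intro eventually_mono[OF eventually_at_right_less]) simp
    have "rad_fin m (tfam T X) n \<le> al * (\<Prod>i<m. s i + 0)"
      by (rule tendsto_le[OF trivial_limit_at_right_real lim tendsto_const ev])
    then show ?thesis by (simp add: s_def)
  qed
  have al0: "al \<ge> 0"
  proof -
    define Z where "Z = (\<lambda>(i::nat) (j::nat). 0::'e)"
    have ZE: "\<forall>i<m. \<forall>j. Z i j \<in> E i" using sub by (simp add: Z_def subspace_0)
    have Z0: "\<forall>i<m. \<forall>j\<ge>(0::nat). Z i j = 0" by (simp add: Z_def)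
    have "rad_norm m (tfam T Z) = rad_fin m (tfam T Z) (\<lambda>_. 0)"
      by (rule rad_norm_fin[OF ml sub ZE]) (simp add: Z_def)
    moreover have "rad_fin m (tfam T Z) (\<lambda>_. 0) \<ge> 0" by (simp add: rad_fin_def)
    moreover have "rad_norm m (tfam T Z) \<le> al"
      unfolding al_def
      by (rule al_upper[OF mas]) (use ZE pos in \<open>auto simp: Z_def wnorm_zero intro!: ell_u_fin[of _ _ 0]\<close>)
    ultimately show ?thesis by linarith
  qed
  have mt: "multi_type_const m p E T (al + e)" if e: "e > 0" for e
    unfolding multi_type_const_def
  proof (intro conjI allI impI)
    show "al + e > 0" using al0 e by simp
    fix n :: "nat \<Rightarrow> nat" and X :: "nat \<Rightarrow> nat \<Rightarrow> 'e" assume X: "\<forall>i<m. \<forall>j<n i. X i j \<in> E i"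
    have P: "0 \<le> (\<Prod>i<m. (\<Sum>j<n i. norm (X i j) powr p i) powr (1 / p i))"
      by (auto intro: prod_nonneg)
    have "rad_fin m (tfam T X) n \<le> al * (\<Prod>i<m. (\<Sum>j<n i. norm (X i j) powr p i) powr (1 / p i))"
      using core[OF X] by simp
    also have "\<dots> \<le> (al + e) * (\<Prod>i<m. (\<Sum>j<n i. norm (X i j) powr p i) powr (1 / p i))"
      using P e by (intro mult_right_mono) auto
    finally show "rad_fin m (tfam T X) n \<le> (al + e) * (\<Prod>i<m. (\<Sum>j<n i. norm (X i j) powr p i) powr (1 / p i))" .
  qed
  have "has_multi_type m p E T" unfolding has_multi_type_def using mt[of 1] by auto
  moreover have "tau_norm m p E T \<le> al"
  proof (rule field_le_epsilon)
    fix e :: real assume e: "0 < e"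
    have bdd: "bdd_below {C. multi_type_const m p E T C}"
      by (rule bdd_belowI[of _ 0]) (auto simp: multi_type_const_def)
    show "tau_norm m p E T \<le> al + e"
      unfolding tau_norm_def by (rule cInf_lower[OF _ bdd]) (use mt[OF e] in auto)
  qed
  ultimately show ?thesis by (simp add: al_def)
qed

end
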